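(* Let $P$ be a finite lattice and $R,R'\in\mathrm{Tr}(P)$ with $\chi^R=\chi^{R'}$. Then $\chi^{R\vee R'}=\chi^R=\chi^{R'}$, where $R\vee R'$ is the join in $\mathrm{Tr}(P)$.
   Context: For a finite lattice $(P,\le)$, a transfer system on $P$ is a partial order $R$ on $P$ refining $\le$ that is closed under restriction: if $x\,R\,z$ and $y\le z$ then $(x\wedge y)\,R\,y$. $\mathrm{Tr}(P)$ is the lattice of transfer systems ordered by inclusion of relations; the join $R\vee R'$ is the smallest transfer system containing both. For $R\in\mathrm{Tr}(P)$ and $x\in P$, $\chi^R(x)$ denotes the least element of $\{y\in P: y\,R\,x\}$ (which exists). *)

theory Defs
  imports Main
begin

text \<open>Transfer systems on a finite lattice P (the carrier is the whole type 'a).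
  A relation is a set of pairs; (x, y) \<in> R means x R y.\<close>

definition transfer_system :: "('a::{finite,lattice} \<times> 'a) set \<Rightarrow> bool" where
  "transfer_system R \<longleftrightarrow>
     refl R \<and> antisym R \<and> trans R \<and>
     R \<subseteq> {(x, y). x \<le> y} \<and>
     (\<forall>x y z. (x, z) \<in> R \<longrightarrow> y \<le> z \<longrightarrow> (inf x y, y) \<in> R)"

definition tr_join :: "('a::{finite,lattice} \<times> 'a) set \<Rightarrow> ('a \<times> 'a) set \<Rightarrow> ('a \<times> 'a) set" where
  "tr_join R R' = \<Inter> {T. transfer_system T \<and> R \<union> R' \<subseteq> T}"

definition chi :: "('a::{finite,lattice} \<times> 'a) set \<Rightarrow> 'a \<Rightarrow> 'a" where
  "chi R x = (LEAST y. (y, x) \<in> R)"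

end

theory Submission
  imports Defs
begin

lemma inf_closed_least:
  fixes S :: "'a::lattice set"
  assumes "finite S" "S \<noteq> {}" "\<And>a b. a \<in> S \<Longrightarrow> b \<in> S \<Longrightarrow> inf a b \<in> S"
  shows "\<exists>m\<in>S. \<forall>y\<in>S. m \<le> y"
proof -
  obtain m where m: "m \<in> S" "\<forall>b\<in>S. b \<le> m \<longrightarrow> m = b"
    using finite_has_minimal[OF assms(1,2)] by blast
  have "m \<le> y" if "y \<in> S" for y
  proof -
    have "inf m y \<in> S" using assms(3) m(1) that by blast
    then have "m = inf m y" using m(2) by simp
    then show ?thesis by (metis inf.cobounded2)
  qed
  then show ?thesis using m(1) by blast
qed

lemma chi_props:
  fixes R :: "('a::{finite,lattice} \<times> 'a) set"
  assumes T: "transfer_system R"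
  shows "(chi R x, x) \<in> R" "\<And>y. (y, x) \<in> R \<Longrightarrow> chi R x \<le> y"
proof -
  let ?S = "{y. (y, x) \<in> R}"
  have refl: "refl R" and tr: "trans R" and sub: "R \<subseteq> {(x, y). x \<le> y}"
    and res: "\<And>a b c. (a, c) \<in> R \<Longrightarrow> b \<le> c \<Longrightarrow> (inf a b, b) \<in> R"
    using T unfolding transfer_system_def by auto
  have ne: "?S \<noteq> {}" using refl by (auto simp: refl_on_def)
  have cl: "inf a b \<in> ?S" if "a \<in> ?S" "b \<in> ?S" for a b
  proof -
    have "b \<le> x" using that sub by auto
    then have "(inf a b, b) \<in> R" using res that by auto
    moreover have "(b, x) \<in> R" using that by simp
    ultimately have "(inf a b, x) \<in> R" using tr by (meson transD)
    then show ?thesis by simp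
  qed
  obtain m where m: "m \<in> ?S" and le: "\<And>y. y \<in> ?S \<Longrightarrow> m \<le> y"
  proof -
    have fin: "finite ?S" by simp
    have "\<exists>m\<in>?S. \<forall>y\<in>?S. m \<le> y" by (rule inf_closed_least[OF fin ne cl])
    then show ?thesis using that by blast
  qed
  have eq: "chi R x = m"
    unfolding chi_def by (rule Least_equality) (use m le in auto)
  show "(chi R x, x) \<in> R" using m eq by simp
  show "\<And>y. (y, x) \<in> R \<Longrightarrow> chi R x \<le> y" using le eq by simp
qed

theorem lemma2p8:
  fixes R R' :: "('a::{finite,lattice} \<times> 'a) set"
  assumes "transfer_system R" and "transfer_system R'"
    and "chi R = chi R'"
  shows "chi (tr_join R R') = chi R \<and> chi (tr_join R R') = chi R'"
proof -
  let ?c = "chi R"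
  define T where "T = {(x, y). x \<le> y \<and> ?c x = ?c y}"
  note c1 = chi_props[OF assms(1)]
  note c2 = chi_props[OF assms(2), folded assms(3)]
  have subR: "R \<subseteq> {(x, y). x \<le> y}" and subR': "R' \<subseteq> {(x, y). x \<le> y}"
    and resR: "\<And>a b c. (a, c) \<in> R \<Longrightarrow> b \<le> c \<Longrightarrow> (inf a b, b) \<in> R"
    and resR': "\<And>a b c. (a, c) \<in> R' \<Longrightarrow> b \<le> c \<Longrightarrow> (inf a b, b) \<in> R'"
    and trR: "trans R" and trR': "trans R'"
    using assms(1,2) unfolding transfer_system_def by auto
  have cle: "?c x \<le> x" for x using c1(1) subR by auto
  have invR: "?c a = ?c b" if ab: "(a, b) \<in> R" for a b
  proof (rule antisym)
    have ab': "a \<le> b" using ab subR by auto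
    have "(inf (?c b) a, a) \<in> R" using resR[OF c1(1) ab'] .
    then have "?c a \<le> inf (?c b) a" using c1(2) by blast
    then show "?c a \<le> ?c b" by (meson inf.boundedE)
    have "(?c a, b) \<in> R" using c1(1) ab trR by (meson transD)
    then show "?c b \<le> ?c a" using c1(2) by blast
  qed
  have invR': "?c a = ?c b" if ab: "(a, b) \<in> R'" for a b
  proof (rule antisym)
    have ab': "a \<le> b" using ab subR' by auto
    have "(inf (?c b) a, a) \<in> R'" using resR'[OF c2(1) ab'] .
    then have "?c a \<le> inf (?c b) a" using c2(2) by blast
    then show "?c a \<le> ?c b" by (meson inf.boundedE)
    have "(?c a, b) \<in> R'" using c2(1) ab trR' by (meson transD)
    then show "?c b \<le> ?c a" using c2(2) by blast
  qed
  have TT: "transfer_system T"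
    unfolding transfer_system_def
  proof (intro conjI allI impI)
    show "refl T" unfolding T_def refl_on_def by auto
    show "antisym T" unfolding T_def antisym_def by auto
    show "trans T" unfolding T_def trans_def by auto
    show "T \<subseteq> {(x, y). x \<le> y}" unfolding T_def by auto
  next
    fix x y z assume xz: "(x, z) \<in> T" and yz: "y \<le> z"
    have xz1: "x \<le> z" and xz2: "?c x = ?c z" using xz unfolding T_def by auto
    have czx: "?c z \<le> x" using cle[of x] xz2 by simp
    have r1: "(inf (?c z) y, y) \<in> R" using resR[OF c1(1) yz] .
    have "inf x y \<le> y" by simp
    from resR[OF r1 this] have r2: "(inf (inf (?c z) y) (inf x y), inf x y) \<in> R" .
    have "inf (inf (?c z) y) (inf x y) = inf (?c z) y"
      using czx by (metis inf.absorb1 inf.assoc inf.commute inf.idem)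
    with r2 have r3: "(inf (?c z) y, inf x y) \<in> R" by simp
    have "?c (inf x y) = ?c y" using invR[OF r1] invR[OF r3] by simp
    then show "(inf x y, y) \<in> T" unfolding T_def by simp
  qed
  have RT: "R \<union> R' \<subseteq> T" unfolding T_def using invR invR' subR subR' by auto
  have JT: "tr_join R R' \<subseteq> T" unfolding tr_join_def using TT RT by blast
  have RJ: "R \<subseteq> tr_join R R'" unfolding tr_join_def by blast
  have "chi (tr_join R R') x = ?c x" for x
    unfolding chi_def[of "tr_join R R'"]
  proof (rule Least_equality)
    show "(?c x, x) \<in> tr_join R R'" using c1(1) RJ by blast
    fix y assume "(y, x) \<in> tr_join R R'"
    then have "(y, x) \<in> T" using JT by blast
    then have "?c y = ?c x" unfolding T_def by simp
    then show "?c x \<le> y" using cle[of y] by simp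
  qed
  then show ?thesis using assms(3) by auto
qed

end
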